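(* Under the same setting as follows — $0<\gamma\le L$, $\alpha\in(0,2/L)$, $\mathcal{X}\subseteq\mathbb{R}^M$ nonempty closed convex, for each $t\ge0$ a nonempty closed convex $\mathcal{X}_t\subseteq\mathcal{X}$ and a differentiable $f_t:\mathbb{R}^M\to\mathbb{R}$ that is $L$-smooth and $\gamma$-strongly convex on $\mathcal{X}$, $\mathbf{x}_t^*:=\arg\min_{\mathbf{x}\in\mathcal{X}_t}f_t(\mathbf{x})$, $r_t:=\|\mathbf{x}_{t-1}^*-\mathbf{x}_t^*\|$, $\mathbf{x}_0\in\mathcal{X}_0$, arbitrary error vectors $\mathbf{e}_t\in\mathbb{R}^M$, and iterates $\mathbf{x}_t=\mathrm{proj}_{\mathcal{X}_t}\{\mathbf{x}_{t-1}-\alpha(\nabla f_t(\mathbf{x}_{t-1})+\mathbf{e}_t)\}$ for $t\ge1$ — define $\rho:=\max\{|1-\alpha\gamma|,|1-\alpha L|\}$, the path length $\omega_T:=\sum_{t=1}^T r_t$ and the cumulative gradient error $E_T:=\sum_{t=1}^T\|\mathbf{e}_t\|$. Then for every $T\ge1$, $$\sum_{t=1}^T\|\mathbf{x}_t-\mathbf{x}_t^*\|\le\frac{1}{1-\rho}\Big[\rho\|\mathbf{x}_0-\mathbf{x}_0^*\|+\rho\,\omega_T+\alpha E_T\Big].$$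
   Context: $\mathrm{proj}_{\mathcal{X}}\{\mathbf{y}\}:=\arg\min_{\mathbf{x}\in\mathcal{X}}\|\mathbf{x}-\mathbf{y}\|^2$ denotes Euclidean projection; $\|\cdot\|$ is the Euclidean norm. Note $\rho<1$ under the stated assumptions. *)

theory Defs
  imports "HOL-Analysis.Analysis"
begin

text \<open>Euclidean projection onto a nonempty closed convex set: library closest_point.\<close>

definition is_gradient :: "('a::real_inner \<Rightarrow> real) \<Rightarrow> ('a \<Rightarrow> 'a) \<Rightarrow> bool" where
  "is_gradient f g \<longleftrightarrow> (\<forall>x. (f has_derivative (\<lambda>h. g x \<bullet> h)) (at x))"

definition L_smooth_on :: "real \<Rightarrow> 'a::real_inner set \<Rightarrow> ('a \<Rightarrow> 'a) \<Rightarrow> bool" where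
  "L_smooth_on L X g \<longleftrightarrow> (\<forall>x\<in>X. \<forall>y\<in>X. norm (g x - g y) \<le> L * norm (x - y))"

definition strongly_convex_on :: "real \<Rightarrow> 'a::real_inner set \<Rightarrow> ('a \<Rightarrow> real) \<Rightarrow> ('a \<Rightarrow> 'a) \<Rightarrow> bool" where
  "strongly_convex_on \<gamma> X f g \<longleftrightarrow>
     (\<forall>x\<in>X. \<forall>y\<in>X. f y \<ge> f x + g x \<bullet> (y - x) + \<gamma> / 2 * (norm (y - x))\<^sup>2)"

definition is_argmin_on :: "('a \<Rightarrow> real) \<Rightarrow> 'a set \<Rightarrow> 'a \<Rightarrow> bool" where
  "is_argmin_on f S x \<longleftrightarrow> x \<in> S \<and> (\<forall>y\<in>S. f x \<le> f y)"

end

theory Submission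
  imports Defs
begin

lemma descent:
  fixes f :: "'a::real_inner \<Rightarrow> real"
  assumes gr: "is_gradient f g" and sm: "L_smooth_on L X g" and cx: "convex X"
    and z: "z \<in> X" and zw: "z + w \<in> X"
  shows "f (z + w) \<le> f z + g z \<bullet> w + L/2 * (norm w)^2"
proof -
  define q where "q s = f (z + s *\<^sub>R w) - s * (g z \<bullet> w) - L/2 * s^2 * (norm w)^2" for s
  have "q 1 \<le> q 0"
  proof (rule DERIV_nonpos_imp_nonincreasing[of 0 1 q])
    fix s :: real assume s: "0 \<le> s" "s \<le> 1"
    have mem: "z + s *\<^sub>R w \<in> X"
    proof -
      have "(1 - s) *\<^sub>R z + s *\<^sub>R (z + w) \<in> X"
        using convexD_alt[OF cx z zw, of s] s by auto
      moreover have "(1 - s) *\<^sub>R z + s *\<^sub>R (z + w) = z + s *\<^sub>R w" by (simp add: algebra_simps)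
      ultimately show ?thesis by simp
    qed
    have d1: "((\<lambda>s. z + s *\<^sub>R w) has_derivative (\<lambda>h. h *\<^sub>R w)) (at s)"
      by (auto intro!: derivative_eq_intros)
    have d2: "(f has_derivative (\<lambda>h. g (z + s *\<^sub>R w) \<bullet> h)) (at (z + s *\<^sub>R w))"
      using gr unfolding is_gradient_def by blast
    have "((\<lambda>s. f (z + s *\<^sub>R w)) has_derivative (\<lambda>h. g (z + s *\<^sub>R w) \<bullet> (h *\<^sub>R w))) (at s)"
      using has_derivative_compose[OF d1 d2] by simp
    moreover have "(\<lambda>h. g (z + s *\<^sub>R w) \<bullet> (h *\<^sub>R w)) = (*) (g (z + s *\<^sub>R w) \<bullet> w)"
      by (auto simp: fun_eq_iff)
    ultimately have d3: "((\<lambda>s. f (z + s *\<^sub>R w)) has_field_derivative (g (z + s *\<^sub>R w) \<bullet> w)) (at s)"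
      by (simp add: has_field_derivative_def)
    have "DERIV q s :> (g (z + s *\<^sub>R w) \<bullet> w - g z \<bullet> w - L/2 * (2 * s) * (norm w)^2)"
      unfolding q_def[abs_def]
      by (auto intro!: derivative_eq_intros d3)
    moreover have "g (z + s *\<^sub>R w) \<bullet> w - g z \<bullet> w - L/2 * (2 * s) * (norm w)^2 \<le> 0"
    proof -
      have "g (z + s *\<^sub>R w) \<bullet> w - g z \<bullet> w = (g (z + s *\<^sub>R w) - g z) \<bullet> w" by (simp add: inner_diff_left)
      also have "\<dots> \<le> norm (g (z + s *\<^sub>R w) - g z) * norm w" by (rule norm_cauchy_schwarz)
      also have "\<dots> \<le> (L * norm (s *\<^sub>R w)) * norm w"
      proof (rule mult_right_mono)
        have "norm (g (z + s *\<^sub>R w) - g z) \<le> L * norm ((z + s *\<^sub>R w) - z)"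
          using sm mem z unfolding L_smooth_on_def by blast
        then show "norm (g (z + s *\<^sub>R w) - g z) \<le> L * norm (s *\<^sub>R w)" by simp
      qed simp
      also have "\<dots> = L * s * (norm w)^2" using s by (simp add: power2_eq_square)
      finally show ?thesis by simp
    qed
    ultimately show "\<exists>y. DERIV q s :> y \<and> y \<le> 0" by blast
  qed simp
  then show ?thesis by (simp add: q_def)
qed

lemma hconv:
  fixes f :: "'a::real_inner \<Rightarrow> real"
  assumes sc: "strongly_convex_on \<gamma> X f g" and x: "x \<in> X" and z: "z \<in> X"
  shows "f z - \<gamma>/2 * (norm z)^2 \<ge> f x - \<gamma>/2 * (norm x)^2 + (g x - \<gamma> *\<^sub>R x) \<bullet> (z - x)"
proof -
  have "f z \<ge> f x + g x \<bullet> (z - x) + \<gamma> / 2 * (norm (z - x))\<^sup>2"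
    using sc x z unfolding strongly_convex_on_def by blast
  moreover have "(norm (z - x))\<^sup>2 = (norm z)^2 - 2 * (x \<bullet> z) + (norm x)^2"
    by (simp add: power2_norm_eq_inner inner_diff_left inner_diff_right inner_commute)
  moreover have "(g x - \<gamma> *\<^sub>R x) \<bullet> (z - x) = g x \<bullet> (z - x) - \<gamma> * (x \<bullet> z) + \<gamma> * (norm x)^2"
    by (simp add: power2_norm_eq_inner inner_diff_left inner_diff_right inner_commute algebra_simps)
  ultimately show ?thesis by (simp add: algebra_simps dot_square_norm)
qed

lemma hdesc:
  fixes f :: "'a::real_inner \<Rightarrow> real"
  assumes gr: "is_gradient f g" and sm: "L_smooth_on L X g" and cx: "convex X"
    and z: "z \<in> X" and zw: "z + w \<in> X"
  shows "f (z + w) - \<gamma>/2 * (norm (z + w))^2 \<le> f z - \<gamma>/2 * (norm z)^2 + (g z - \<gamma> *\<^sub>R z) \<bullet> w + (L - \<gamma>)/2 * (norm w)^2"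
proof -
  have "f (z + w) \<le> f z + g z \<bullet> w + L/2 * (norm w)^2" by (rule descent[OF assms])
  moreover have "(norm (z + w))^2 = (norm z)^2 + 2 * (z \<bullet> w) + (norm w)^2"
    by (simp add: power2_norm_eq_inner inner_add_left inner_add_right inner_commute)
  moreover have "(g z - \<gamma> *\<^sub>R z) \<bullet> w = g z \<bullet> w - \<gamma> * (z \<bullet> w)"
    by (simp add: inner_diff_left)
  ultimately show ?thesis by (simp add: field_simps)
qed

lemma local_ineq:
  fixes f :: "'a::real_inner \<Rightarrow> real"
  assumes gr: "is_gradient f g" and sm: "L_smooth_on L X g" and cx: "convex X"
    and sc: "strongly_convex_on \<gamma> X f g"
    and x: "x \<in> X" and y: "y \<in> X" and yW: "y + W \<in> X" and xW: "x - W \<in> X"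
  shows "((g x - \<gamma> *\<^sub>R x) - (g y - \<gamma> *\<^sub>R y)) \<bullet> (x - y)
     \<ge> 2 * (((g x - \<gamma> *\<^sub>R x) - (g y - \<gamma> *\<^sub>R y)) \<bullet> W) - (L - \<gamma>) * (norm W)^2"
proof -
  define h where "h z = f z - \<gamma>/2 * (norm z)^2" for z
  define Gx where "Gx = g x - \<gamma> *\<^sub>R x"
  define Gy where "Gy = g y - \<gamma> *\<^sub>R y"
  have A1: "h (y + W) \<ge> h x + Gx \<bullet> (y + W - x)"
    using hconv[OF sc x yW] unfolding h_def Gx_def by simp
  have A2: "h (y + W) \<le> h y + Gy \<bullet> W + (L - \<gamma>)/2 * (norm W)^2"
    using hdesc[OF gr sm cx y yW, of \<gamma>] unfolding h_def Gy_def by simp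
  have B1: "h (x + (- W)) \<ge> h y + Gy \<bullet> (x + (- W) - y)"
    using hconv[OF sc y, of "x + (-W)"] xW unfolding h_def Gy_def by simp
  have B2: "h (x + (- W)) \<le> h x + Gx \<bullet> (- W) + (L - \<gamma>)/2 * (norm (- W))^2"
    using hdesc[OF gr sm cx x, of "-W" \<gamma>] xW unfolding h_def Gx_def by simp
  have e1: "Gx \<bullet> (y + W - x) = Gx \<bullet> y + Gx \<bullet> W - Gx \<bullet> x" by (simp add: inner_simps)
  have e2: "Gy \<bullet> (x + (- W) - y) = Gy \<bullet> x - Gy \<bullet> W - Gy \<bullet> y" by (simp add: inner_simps)
  have e3: "(Gx - Gy) \<bullet> (x - y) = Gx \<bullet> x - Gx \<bullet> y - Gy \<bullet> x + Gy \<bullet> y" by (simp add: inner_simps)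
  have e4: "(Gx - Gy) \<bullet> W = Gx \<bullet> W - Gy \<bullet> W" by (simp add: inner_simps)
  have "(Gx - Gy) \<bullet> (x - y) \<ge> 2 * ((Gx - Gy) \<bullet> W) - (L - \<gamma>) * (norm W)^2"
    using A1 A2 B1 B2 e1 e2 e3 e4 by (simp add: inner_minus_right)
  then show ?thesis unfolding Gx_def Gy_def .
qed

definition Fq :: "('a::real_inner \<Rightarrow> 'a) \<Rightarrow> real \<Rightarrow> real \<Rightarrow> 'a \<Rightarrow> 'a \<Rightarrow> 'a \<Rightarrow> real" where
  "Fq g \<gamma> K x y v = ((g x - \<gamma> *\<^sub>R x) - (g y - \<gamma> *\<^sub>R y)) \<bullet> v - K/2 * ((x - y) \<bullet> v) - K/2 * norm (x - y) * norm v"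

lemma Fq_scale: "0 \<le> c \<Longrightarrow> Fq g \<gamma> K x y (c *\<^sub>R v) = c * Fq g \<gamma> K x y v"
  by (simp add: Fq_def algebra_simps)

lemma local_F:
  fixes f :: "'a::real_inner \<Rightarrow> real"
  assumes gr: "is_gradient f g" and sm: "L_smooth_on L X g" and cx: "convex X"
    and sc: "strongly_convex_on \<gamma> X f g"
    and x: "x \<in> X" and y: "y \<in> X"
    and u: "norm u = norm (x - y) / 2"
    and p: "(1/2) *\<^sub>R (x + y) + u \<in> X" and m: "(1/2) *\<^sub>R (x + y) - u \<in> X"
  shows "Fq g \<gamma> (L - \<gamma>) x y u \<le> 0"
proof -
  define W where "W = (1/2) *\<^sub>R (x - y) + u"
  have hy: "y = (1/2) *\<^sub>R y + (1/2) *\<^sub>R y" by (simp add: scaleR_left_distrib[symmetric])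
  have hx: "x = (1/2) *\<^sub>R x + (1/2) *\<^sub>R x" by (simp add: scaleR_left_distrib[symmetric])
  have "y + W = (1/2) *\<^sub>R (x + y) + u" unfolding W_def
    by (subst hy) (simp add: algebra_simps)
  then have yW: "y + W \<in> X" using p by simp
  have "x - W = (1/2) *\<^sub>R (x + y) - u" unfolding W_def
    by (subst hx) (simp add: algebra_simps)
  then have xW: "x - W \<in> X" using m by simp
  define U where "U = (g x - \<gamma> *\<^sub>R x) - (g y - \<gamma> *\<^sub>R y)"
  define K where "K = L - \<gamma>"
  define n where "n = norm (x - y)"
  have li: "U \<bullet> (x - y) \<ge> 2 * (U \<bullet> W) - K * (norm W)^2"
    using local_ineq[OF gr sm cx sc x y yW xW] unfolding U_def K_def .
  have nW: "(norm W)^2 = n^2/4 + (x - y) \<bullet> u + (norm u)^2"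
    unfolding W_def n_def by (simp add: power2_norm_eq_inner inner_simps inner_commute)
  have UW: "U \<bullet> W = (1/2) * (U \<bullet> (x - y)) + U \<bullet> u"
    unfolding W_def by (simp add: inner_simps)
  have nu0: "norm u = n/2" using u n_def by simp
  have nu: "(norm u)^2 = n^2/4" unfolding nu0 by (simp add: power_divide)
  have "2 * (U \<bullet> u) \<le> K * (n^2/2 + (x - y) \<bullet> u)"
    using li nW UW nu by (simp add: algebra_simps)
  moreover have "n^2/2 = n * norm u" unfolding nu0 by (simp add: power2_eq_square)
  ultimately have "U \<bullet> u \<le> K/2 * ((x - y) \<bullet> u) + K/2 * n * norm u" by (simp add: algebra_simps)
  then show ?thesis unfolding Fq_def U_def K_def n_def by simp
qed

lemma room_F:
  fixes f :: "'a::euclidean_space \<Rightarrow> real"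
  assumes gr: "is_gradient f g" and sm: "L_smooth_on L X g" and cx: "convex X"
    and sc: "strongly_convex_on \<gamma> X f g"
    and x: "x \<in> X" and y: "y \<in> X" and r: "r > 0"
    and room: "\<And>c. \<bar>c\<bar> * norm v < r \<Longrightarrow> x + c *\<^sub>R v \<in> X \<and> y + c *\<^sub>R v \<in> X"
  shows "Fq g \<gamma> (L - \<gamma>) x y v \<le> 0"
proof (cases "v = 0 \<or> x = y")
  case True
  then show ?thesis by (auto simp: Fq_def)
next
  case False
  then have v0: "v \<noteq> 0" and xy: "x \<noteq> y" by auto
  define n where "n = norm (x - y)"
  have n0: "n > 0" using xy n_def by simp
  have nv: "norm v > 0" using v0 by simp
  obtain N :: nat where N: "n / r < real N" using reals_Archimedean2 by blast
  have Npos: "real N > 0" using N n0 r by (smt (verit) divide_pos_pos)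
  have nN: "n / real N < r" using N Npos r by (simp add: field_simps)
  define z where "z i = y + (real i / real N) *\<^sub>R (x - y)" for i :: nat
  define K where "K = L - \<gamma>"
  have comb: "(1 - l) *\<^sub>R (y + c *\<^sub>R v) + l *\<^sub>R (x + c *\<^sub>R v) = y + l *\<^sub>R (x - y) + c *\<^sub>R v" for l c
    by (simp add: algebra_simps)
  have inX: "y + l *\<^sub>R (x - y) + c *\<^sub>R v \<in> X" if "0 \<le> l" "l \<le> 1" "\<bar>c\<bar> * norm v < r" for l c
  proof -
    have "(1 - l) *\<^sub>R (y + c *\<^sub>R v) + l *\<^sub>R (x + c *\<^sub>R v) \<in> X"
      using convexD_alt[OF cx, of "y + c *\<^sub>R v" "x + c *\<^sub>R v" l] room[OF that(3)] that by auto
    then show ?thesis by (simp only: comb)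
  qed
  have zX: "z i \<in> X" if "i \<le> N" for i
    using inX[of "real i / real N" 0] that Npos r unfolding z_def by (auto simp: field_simps)
  have zd: "z (Suc i) - z i = (1 / real N) *\<^sub>R (x - y)" for i
  proof -
    have "z (Suc i) - z i = (real (Suc i) / real N - real i / real N) *\<^sub>R (x - y)"
      unfolding z_def by (simp add: scaleR_diff_left)
    also have "real (Suc i) / real N - real i / real N = 1 / real N"
      by (simp add: add_divide_distrib)
    finally show ?thesis .
  qed
  have piece: "Fq g \<gamma> K (z (Suc i)) (z i) v \<le> 0" if i: "i < N" for i
  proof -
    define c where "c = n / (2 * real N * norm v)"
    have c0: "c > 0" using n0 Npos nv by (simp add: c_def)
    define u where "u = c *\<^sub>R v"
    have nz: "norm (z (Suc i) - z i) = n / real N" unfolding zd n_def using Npos by simp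
    have nu: "norm u = norm (z (Suc i) - z i) / 2" unfolding nz u_def c_def using nv Npos n0 by simp
    have cv: "\<bar>c\<bar> * norm v < r" unfolding c_def using nv Npos nN n0 r by (simp add: field_simps)
    define l where "l = (2 * real i + 1) / (2 * real N)"
    have l0: "0 \<le> l" "l \<le> 1" using i Npos by (auto simp: l_def field_simps)
    have mid: "(1/2) *\<^sub>R (z (Suc i) + z i) = y + l *\<^sub>R (x - y)"
      unfolding z_def l_def using Npos
      by (simp add: euclidean_eq_iff[where 'a='a] inner_simps field_simps)
    have p: "(1/2) *\<^sub>R (z (Suc i) + z i) + u \<in> X"
      unfolding mid u_def using inX[OF l0 cv] .
    have cv': "\<bar>-c\<bar> * norm v < r" using cv by simp
    have m: "(1/2) *\<^sub>R (z (Suc i) + z i) - u \<in> X"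
      unfolding mid u_def using inX[OF l0 cv'] by (simp add: algebra_simps)
    have "Fq g \<gamma> (L - \<gamma>) (z (Suc i)) (z i) u \<le> 0"
      by (rule local_F[OF gr sm cx sc zX zX nu p m]) (use i in auto)
    then have "c * Fq g \<gamma> K (z (Suc i)) (z i) v \<le> 0"
      unfolding u_def K_def using Fq_scale[of c g \<gamma> "L - \<gamma>" "z (Suc i)" "z i" v] c0 by simp
    then show ?thesis using c0 by (simp add: mult_le_0_iff)
  qed
  define phi where "phi i = (g (z i) - \<gamma> *\<^sub>R z i) \<bullet> v" for i
  have Fi: "Fq g \<gamma> K (z (Suc i)) (z i) v = (phi (Suc i) - phi i) - (K/2 * ((x - y) \<bullet> v) + K/2 * n * norm v) / real N" for i
  proof -
    have nz': "norm (z (Suc i) - z i) = n / real N" unfolding zd n_def using Npos by simp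
    have "Fq g \<gamma> K (z (Suc i)) (z i) v = (phi (Suc i) - phi i) - K/2 * ((1 / real N) * ((x - y) \<bullet> v)) - K/2 * (n / real N) * norm v"
      unfolding Fq_def phi_def nz' unfolding zd by (simp add: inner_diff_left)
    also have "\<dots> = (phi (Suc i) - phi i) - (K/2 * ((x - y) \<bullet> v) + K/2 * n * norm v) / real N"
      using Npos by (simp add: divide_simps)
    finally show ?thesis .
  qed
  have "(\<Sum>i<N. Fq g \<gamma> K (z (Suc i)) (z i) v) = (phi N - phi 0) - (K/2 * ((x - y) \<bullet> v) + K/2 * n * norm v)"
    using sum_lessThan_telescope[of phi N] Npos unfolding Fi by (simp add: sum_subtractf)
  also have "\<dots> = Fq g \<gamma> K x y v"
  proof -
    have "z N = x" "z 0 = y" unfolding z_def using Npos by auto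
    then show ?thesis unfolding phi_def Fq_def n_def by (simp add: inner_diff_left)
  qed
  finally have "Fq g \<gamma> K x y v = (\<Sum>i<N. Fq g \<gamma> K (z (Suc i)) (z i) v)" by simp
  also have "\<dots> \<le> 0" using piece by (intro sum_nonpos) auto
  finally show ?thesis unfolding K_def .
qed

lemma small_le0:
  fixes a M :: real
  assumes "\<And>e. 0 < e \<Longrightarrow> e \<le> 1 \<Longrightarrow> a \<le> e * M"
  shows "a \<le> 0"
proof (rule ccontr)
  assume "\<not> a \<le> 0"
  then have a: "a > 0" by simp
  define e where "e = min 1 (a / (\<bar>M\<bar> + 1))"
  have e0: "0 < e" "e \<le> 1" using a by (auto simp: e_def)
  have "e * M \<le> e * \<bar>M\<bar>" using e0 by (simp add: mult_left_mono)
  also have "\<dots> \<le> a / (\<bar>M\<bar> + 1) * \<bar>M\<bar>" by (rule mult_right_mono) (auto simp: e_def)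
  also have "\<dots> < a" using a by (simp add: field_simps)
  finally show False using assms[OF e0] by simp
qed

lemma G_lip:
  assumes sm: "L_smooth_on L X g" and "x \<in> X" "x' \<in> X"
  shows "norm ((g x - \<gamma> *\<^sub>R x) - (g x' - \<gamma> *\<^sub>R x')) \<le> (L + \<bar>\<gamma>\<bar>) * norm (x - x')"
proof -
  have "(g x - \<gamma> *\<^sub>R x) - (g x' - \<gamma> *\<^sub>R x') = (g x - g x') - \<gamma> *\<^sub>R (x - x')"
    by (simp add: algebra_simps)
  then have "norm ((g x - \<gamma> *\<^sub>R x) - (g x' - \<gamma> *\<^sub>R x')) \<le> norm (g x - g x') + norm (\<gamma> *\<^sub>R (x - x'))"
    by (metis norm_triangle_ineq4)
  also have "\<dots> \<le> L * norm (x - x') + \<bar>\<gamma>\<bar> * norm (x - x')"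
    using sm assms unfolding L_smooth_on_def by auto
  finally show ?thesis by (simp add: algebra_simps)
qed

lemma Fq_perturb:
  assumes sm: "L_smooth_on L X g" and X: "x \<in> X" "x' \<in> X" "y \<in> X" "y' \<in> X"
  shows "Fq g \<gamma> K x y v \<le> Fq g \<gamma> K x' y' v + (L + \<bar>\<gamma>\<bar> + \<bar>K\<bar>) * (norm (x - x') + norm (y - y')) * norm v"
proof -
  define Gx where "Gx = g x - \<gamma> *\<^sub>R x"
  define Gx' where "Gx' = g x' - \<gamma> *\<^sub>R x'"
  define Gy where "Gy = g y - \<gamma> *\<^sub>R y"
  define Gy' where "Gy' = g y' - \<gamma> *\<^sub>R y'"
  have e: "Fq g \<gamma> K x y v - Fq g \<gamma> K x' y' v = (Gx - Gx') \<bullet> v - (Gy - Gy') \<bullet> v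
      - K/2 * (((x - x') - (y - y')) \<bullet> v) - K/2 * (norm (x - y) - norm (x' - y')) * norm v"
    unfolding Fq_def Gx_def Gx'_def Gy_def Gy'_def by (simp add: inner_simps algebra_simps)
  have b1: "(Gx - Gx') \<bullet> v \<le> (L + \<bar>\<gamma>\<bar>) * norm (x - x') * norm v"
  proof -
    have "(Gx - Gx') \<bullet> v \<le> norm (Gx - Gx') * norm v" by (rule norm_cauchy_schwarz)
    also have "\<dots> \<le> ((L + \<bar>\<gamma>\<bar>) * norm (x - x')) * norm v"
      using G_lip[OF sm X(1,2), of \<gamma>] unfolding Gx_def Gx'_def by (rule mult_right_mono) simp
    finally show ?thesis .
  qed
  have b2: "- ((Gy - Gy') \<bullet> v) \<le> (L + \<bar>\<gamma>\<bar>) * norm (y - y') * norm v"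
  proof -
    have "- ((Gy - Gy') \<bullet> v) = (Gy' - Gy) \<bullet> v" by (simp add: inner_diff_left)
    also have "\<dots> \<le> norm (Gy' - Gy) * norm v" by (rule norm_cauchy_schwarz)
    also have "\<dots> \<le> ((L + \<bar>\<gamma>\<bar>) * norm (y' - y)) * norm v"
      using G_lip[OF sm X(4,3), of \<gamma>] unfolding Gy_def Gy'_def by (rule mult_right_mono) simp
    finally show ?thesis by (simp add: norm_minus_commute)
  qed
  have b3: "\<bar>((x - x') - (y - y')) \<bullet> v\<bar> \<le> (norm (x - x') + norm (y - y')) * norm v"
  proof -
    have "\<bar>((x - x') - (y - y')) \<bullet> v\<bar> \<le> norm ((x - x') - (y - y')) * norm v" by (rule Cauchy_Schwarz_ineq2)
    also have "\<dots> \<le> (norm (x - x') + norm (y - y')) * norm v"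
      using norm_triangle_ineq4[of "x - x'" "y - y'"] by (rule mult_right_mono) simp
    finally show ?thesis .
  qed
  have b4: "\<bar>norm (x - y) - norm (x' - y')\<bar> \<le> norm (x - x') + norm (y - y')"
  proof -
    have "x - y = (x' - y') + ((x - x') - (y - y'))" by simp
    have "\<bar>norm (x - y) - norm (x' - y')\<bar> \<le> norm ((x - y) - (x' - y'))" by (rule norm_triangle_ineq3)
    also have "(x - y) - (x' - y') = (x - x') - (y - y')" by simp
    finally show ?thesis using norm_triangle_ineq4[of "x - x'" "y - y'"] by simp
  qed
  have b3': "- (K/2 * (((x - x') - (y - y')) \<bullet> v)) \<le> \<bar>K\<bar>/2 * ((norm (x - x') + norm (y - y')) * norm v)"
  proof -
    have "- (K/2 * (((x - x') - (y - y')) \<bullet> v)) \<le> \<bar>K/2\<bar> * \<bar>((x - x') - (y - y')) \<bullet> v\<bar>"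
      by (metis abs_ge_minus_self abs_mult)
    also have "\<dots> \<le> \<bar>K\<bar>/2 * ((norm (x - x') + norm (y - y')) * norm v)"
      using b3 by (simp add: mult_left_mono)
    finally show ?thesis .
  qed
  have b4': "- (K/2 * (norm (x - y) - norm (x' - y')) * norm v) \<le> \<bar>K\<bar>/2 * ((norm (x - x') + norm (y - y')) * norm v)"
  proof -
    have "- (K/2 * (norm (x - y) - norm (x' - y')) * norm v) \<le> \<bar>K/2\<bar> * \<bar>norm (x - y) - norm (x' - y')\<bar> * norm v"
    proof -
      have "- (K/2 * (norm (x - y) - norm (x' - y')) * norm v) \<le> \<bar>K/2 * (norm (x - y) - norm (x' - y')) * norm v\<bar>"
        by (rule abs_ge_minus_self)
      also have "\<dots> = \<bar>K/2\<bar> * \<bar>norm (x - y) - norm (x' - y')\<bar> * norm v" by (simp add: abs_mult)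
      finally show ?thesis .
    qed
    also have "\<dots> \<le> \<bar>K\<bar>/2 * ((norm (x - x') + norm (y - y')) * norm v)"
      using mult_right_mono[OF mult_left_mono[OF b4, of "\<bar>K\<bar>/2"], of "norm v"] by (simp add: mult.assoc)
    finally show ?thesis .
  qed
  have "Fq g \<gamma> K x y v - Fq g \<gamma> K x' y' v \<le> (L + \<bar>\<gamma>\<bar>) * norm (x - x') * norm v + (L + \<bar>\<gamma>\<bar>) * norm (y - y') * norm v
     + \<bar>K\<bar>/2 * ((norm (x - x') + norm (y - y')) * norm v) + \<bar>K\<bar>/2 * ((norm (x - x') + norm (y - y')) * norm v)"
    unfolding e using b1 b2 b3' b4' by linarith
  then show ?thesis by (simp add: algebra_simps)
qed

lemma global_F:
  fixes f :: "'a::euclidean_space \<Rightarrow> real"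
  assumes gr: "is_gradient f g" and sm: "L_smooth_on L X g" and cx: "convex X"
    and sc: "strongly_convex_on \<gamma> X f g"
    and x: "x \<in> X" and y: "y \<in> X" and p: "p \<in> X" and q: "q \<in> X"
  shows "Fq g \<gamma> (L - \<gamma>) x y (p - q) \<le> 0"
proof -
  define v where "v = p - q"
  have "X \<noteq> {}" using x by auto
  then obtain c where c: "c \<in> rel_interior X" using rel_interior_eq_empty[OF cx] by auto
  define M where "M = (L + \<bar>\<gamma>\<bar> + \<bar>L - \<gamma>\<bar>) * (norm (x - c) + norm (y - c)) * norm v"
  have aff: "affine (affine hull X)" by (rule affine_affine_hull)
  have "Fq g \<gamma> (L - \<gamma>) x y v \<le> e * M" if e: "0 < e" "e \<le> 1" for e
  proof -
    define x' where "x' = x - e *\<^sub>R (x - c)"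
    define y' where "y' = y - e *\<^sub>R (y - c)"
    have x'r: "x' \<in> rel_interior X" unfolding x'_def
      by (rule rel_interior_closure_convex_shrink[OF cx c _ e]) (use x closure_subset in auto)
    have y'r: "y' \<in> rel_interior X" unfolding y'_def
      by (rule rel_interior_closure_convex_shrink[OF cx c _ e]) (use y closure_subset in auto)
    have x'X: "x' \<in> X" and y'X: "y' \<in> X" using x'r y'r rel_interior_subset by auto
    obtain rx where rx: "rx > 0" "ball x' rx \<inter> affine hull X \<subseteq> X"
      using x'r unfolding mem_rel_interior_ball by auto
    obtain ry where ry: "ry > 0" "ball y' ry \<inter> affine hull X \<subseteq> X"
      using y'r unfolding mem_rel_interior_ball by auto
    have room: "x' + s *\<^sub>R v \<in> X \<and> y' + s *\<^sub>R v \<in> X" if s: "\<bar>s\<bar> * norm v < min rx ry" for s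
    proof -
      have pa: "p \<in> affine hull X" "q \<in> affine hull X" using p q hull_subset[of X affine] by auto
      have "x' + s *\<^sub>R v \<in> affine hull X" unfolding v_def
        by (rule mem_affine_3_minus[OF aff _ pa]) (use x'X hull_subset[of X affine] in auto)
      moreover have "x' + s *\<^sub>R v \<in> ball x' rx" using s by (simp add: dist_norm)
      moreover have "y' + s *\<^sub>R v \<in> affine hull X" unfolding v_def
        by (rule mem_affine_3_minus[OF aff _ pa]) (use y'X hull_subset[of X affine] in auto)
      moreover have "y' + s *\<^sub>R v \<in> ball y' ry" using s by (simp add: dist_norm)
      ultimately show ?thesis using rx ry by auto
    qed
    have F': "Fq g \<gamma> (L - \<gamma>) x' y' v \<le> 0"
      by (rule room_F[where r="min rx ry", OF gr sm cx sc x'X y'X _ room]) (use rx ry in auto)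
    have "Fq g \<gamma> (L - \<gamma>) x y v \<le> Fq g \<gamma> (L - \<gamma>) x' y' v + (L + \<bar>\<gamma>\<bar> + \<bar>L - \<gamma>\<bar>) * (norm (x - x') + norm (y - y')) * norm v"
      by (rule Fq_perturb[OF sm x x'X y y'X])
    also have "norm (x - x') + norm (y - y') = e * (norm (x - c) + norm (y - c))"
      unfolding x'_def y'_def using e by (simp add: algebra_simps flip: scaleR_diff_right)
    finally show ?thesis using F' unfolding M_def by (simp add: algebra_simps)
  qed
  then show ?thesis unfolding v_def[symmetric] by (rule small_le0)
qed

lemma contraction:
  fixes f :: "'a::euclidean_space \<Rightarrow> real"
  assumes gr: "is_gradient f g" and sm: "L_smooth_on L X g" and cx: "convex X"
    and sc: "strongly_convex_on \<gamma> X f g" and gL: "\<gamma> \<le> L" and a0: "0 < \<alpha>"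
    and x: "x \<in> X" and y: "y \<in> X" and p: "p \<in> X" and q: "q \<in> X"
  shows "((x - y) - \<alpha> *\<^sub>R (g x - g y)) \<bullet> (p - q)
     \<le> max \<bar>1 - \<alpha> * \<gamma>\<bar> \<bar>1 - \<alpha> * L\<bar> * norm (x - y) * norm (p - q)"
proof -
  define w where "w = p - q"
  define U where "U = (g x - \<gamma> *\<^sub>R x) - (g y - \<gamma> *\<^sub>R y)"
  define K where "K = L - \<gamma>"
  define a where "a = (x - y) \<bullet> w"
  define N where "N = norm (x - y) * norm w"
  have aN: "\<bar>a\<bar> \<le> N" unfolding a_def N_def by (rule Cauchy_Schwarz_ineq2)
  have F: "Fq g \<gamma> (L - \<gamma>) x y (q - p) \<le> 0" by (rule global_F[OF gr sm cx sc x y q p])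
  have qp: "q - p = - w" unfolding w_def by simp
  have F2: "- (U \<bullet> w) \<le> - (K/2) * a + K/2 * N"
    using F unfolding Fq_def qp U_def K_def a_def N_def by (simp add: inner_minus_right)
  have e: "((x - y) - \<alpha> *\<^sub>R (g x - g y)) \<bullet> w = (1 - \<alpha> * \<gamma>) * a - \<alpha> * (U \<bullet> w)"
    unfolding U_def a_def by (simp add: inner_simps algebra_simps)
  define B where "B = \<alpha> * K / 2"
  define A where "A = 1 - \<alpha> * \<gamma> - B"
  have B0: "B \<ge> 0" unfolding B_def K_def using gL a0 by simp
  have "((x - y) - \<alpha> *\<^sub>R (g x - g y)) \<bullet> w \<le> (1 - \<alpha> * \<gamma>) * a + \<alpha> * (- (K/2) * a + K/2 * N)"
    unfolding e using mult_left_mono[OF F2, of \<alpha>] a0 by simp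
  also have "\<dots> = A * a + B * N" unfolding A_def B_def by (simp add: algebra_simps)
  also have "\<dots> \<le> \<bar>A\<bar> * N + B * N"
  proof -
    have "A * a \<le> \<bar>A\<bar> * \<bar>a\<bar>" by (simp add: abs_mult[symmetric])
    also have "\<dots> \<le> \<bar>A\<bar> * N" using aN by (simp add: mult_left_mono)
    finally show ?thesis by simp
  qed
  also have "\<dots> \<le> max \<bar>1 - \<alpha> * \<gamma>\<bar> \<bar>1 - \<alpha> * L\<bar> * N"
  proof -
    have N0: "N \<ge> 0" unfolding N_def by simp
    have h1: "1 - \<alpha> * \<gamma> = A + B" unfolding A_def by simp
    have h2: "1 - \<alpha> * L = A - B" unfolding A_def B_def K_def by (simp add: algebra_simps)
    have "\<bar>A\<bar> + B \<le> max \<bar>A + B\<bar> \<bar>A - B\<bar>" using B0 by (simp add: abs_if max_def)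
    then have "(\<bar>A\<bar> + B) * N \<le> max \<bar>1 - \<alpha> * \<gamma>\<bar> \<bar>1 - \<alpha> * L\<bar> * N"
      unfolding h1 h2 using N0 by (rule mult_right_mono)
    then show ?thesis by (simp add: algebra_simps)
  qed
  finally show ?thesis unfolding w_def N_def by (simp add: mult.assoc)
qed

lemma opt:
  fixes f :: "'a::real_inner \<Rightarrow> real"
  assumes sm: "L_smooth_on L X g" and sc: "strongly_convex_on \<gamma> X f g" and g0: "0 \<le> \<gamma>"
    and SX: "S \<subseteq> X" and cS: "convex S" and am: "is_argmin_on f S xs" and y: "y \<in> S"
  shows "g xs \<bullet> (y - xs) \<ge> 0"
proof -
  have xs: "xs \<in> S" and mn: "\<And>z. z \<in> S \<Longrightarrow> f xs \<le> f z" using am unfolding is_argmin_on_def by auto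
  have "- (g xs \<bullet> (y - xs)) \<le> 0"
  proof (rule small_le0[where M = "L * (norm (y - xs))^2"])
    fix e :: real assume e: "0 < e" "e \<le> 1"
    define z where "z = xs + e *\<^sub>R (y - xs)"
    have "(1 - e) *\<^sub>R xs + e *\<^sub>R y \<in> S" using convexD_alt[OF cS xs y, of e] e by auto
    moreover have "(1 - e) *\<^sub>R xs + e *\<^sub>R y = z" unfolding z_def by (simp add: algebra_simps)
    ultimately have zS: "z \<in> S" by simp
    have "f xs \<ge> f z + g z \<bullet> (xs - z) + \<gamma> / 2 * (norm (xs - z))\<^sup>2"
      using sc zS xs SX unfolding strongly_convex_on_def by blast
    moreover have "\<gamma> / 2 * (norm (xs - z))\<^sup>2 \<ge> 0" using g0 by simp
    moreover have "f z \<ge> f xs" using mn[OF zS] .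
    moreover have "g z \<bullet> (xs - z) = - e * (g z \<bullet> (y - xs))" unfolding z_def by (simp add: inner_simps)
    ultimately have "e * (g z \<bullet> (y - xs)) \<ge> 0" by linarith
    then have gz: "g z \<bullet> (y - xs) \<ge> 0" using e by (simp add: zero_le_mult_iff)
    have "(g z - g xs) \<bullet> (y - xs) \<le> norm (g z - g xs) * norm (y - xs)" by (rule norm_cauchy_schwarz)
    also have "\<dots> \<le> (L * norm (z - xs)) * norm (y - xs)"
      using sm zS xs SX unfolding L_smooth_on_def by (intro mult_right_mono) auto
    also have "\<dots> = e * (L * (norm (y - xs))^2)" unfolding z_def using e by (simp add: power2_eq_square)
    finally have "(g z - g xs) \<bullet> (y - xs) \<le> e * (L * (norm (y - xs))^2)" .
    then show "- (g xs \<bullet> (y - xs)) \<le> e * (L * (norm (y - xs))^2)" using gz by (simp add: inner_diff_left)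
  qed
  then show ?thesis by simp
qed

lemma shift_sum: fixes a :: "nat \<Rightarrow> real" and T :: nat
  shows "(\<Sum>t=1..T. a (t - 1)) = a 0 + (\<Sum>t=1..T. a t) - a T"
  by (induction T) auto

theorem corollary1:
  fixes X :: "(real ^ 'm) set"
    and Xt :: "nat \<Rightarrow> (real ^ 'm) set"
    and f :: "nat \<Rightarrow> real ^ 'm \<Rightarrow> real"
    and g :: "nat \<Rightarrow> real ^ 'm \<Rightarrow> real ^ 'm"
    and xstar x e :: "nat \<Rightarrow> real ^ 'm"
    and \<gamma> L \<alpha> :: real and T :: nat
  assumes "0 < \<gamma>" and "\<gamma> \<le> L"
    and "0 < \<alpha>" and "\<alpha> < 2 / L"
    and "X \<noteq> {}" and "closed X" and "convex X"
    and "\<And>t. Xt t \<noteq> {}" and "\<And>t. closed (Xt t)" and "\<And>t. convex (Xt t)"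
    and "\<And>t. Xt t \<subseteq> X"
    and "\<And>t. is_gradient (f t) (g t)"
    and "\<And>t. L_smooth_on L X (g t)"
    and "\<And>t. strongly_convex_on \<gamma> X (f t) (g t)"
    and "\<And>t. is_argmin_on (f t) (Xt t) (xstar t)"
    and "x 0 \<in> Xt 0"
    and "\<And>t. t \<ge> 1 \<Longrightarrow> x t = closest_point (Xt t) (x (t - 1) - \<alpha> *\<^sub>R (g t (x (t - 1)) + e t))"
    and "T \<ge> 1"
  shows "(\<Sum>t=1..T. norm (x t - xstar t)) \<le>
           1 / (1 - max \<bar>1 - \<alpha> * \<gamma>\<bar> \<bar>1 - \<alpha> * L\<bar>) *
           (max \<bar>1 - \<alpha> * \<gamma>\<bar> \<bar>1 - \<alpha> * L\<bar> * norm (x 0 - xstar 0)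
            + max \<bar>1 - \<alpha> * \<gamma>\<bar> \<bar>1 - \<alpha> * L\<bar> * (\<Sum>t=1..T. norm (xstar (t - 1) - xstar t))
            + \<alpha> * (\<Sum>t=1..T. norm (e t)))"
proof -
  note as = assms
  define \<rho> where "\<rho> = max \<bar>1 - \<alpha> * \<gamma>\<bar> \<bar>1 - \<alpha> * L\<bar>"
  have Lpos: "L > 0" using as(1,2) by simp
  have aL: "\<alpha> * L < 2" using as(4) Lpos by (simp add: field_simps)
  have ag: "\<alpha> * \<gamma> \<le> \<alpha> * L" using as(2,3) by simp
  have ag0: "\<alpha> * \<gamma> > 0" using as(1,3) by simp
  have rho1: "\<rho> < 1" unfolding \<rho>_def using aL ag ag0 by auto
  have rho0: "\<rho> \<ge> 0" unfolding \<rho>_def by simp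
  define a where "a t = norm (x t - xstar t)" for t
  have xin: "x t \<in> Xt t" for t
  proof (cases "t = 0")
    case True then show ?thesis using as(16) by simp
  next
    case False then show ?thesis using as(17)[of t] closest_point_in_set[OF as(9) as(8)] by simp
  qed
  have step: "a t \<le> \<rho> * a (t - 1) + \<rho> * norm (xstar (t - 1) - xstar t) + \<alpha> * norm (e t)" if t: "t \<ge> 1" for t
  proof -
    define xp where "xp = x (t - 1)"
    define xs where "xs = xstar t"
    define c where "c = x t"
    define a' where "a' = xp - \<alpha> *\<^sub>R (g t xp + e t)"
    define b where "b = xs - \<alpha> *\<^sub>R g t xs"
    have xsS: "xs \<in> Xt t" using as(15)[of t] unfolding xs_def is_argmin_on_def by auto
    have xpX: "xp \<in> X" using xin[of "t - 1"] as(11) unfolding xp_def by auto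
    have xsX: "xs \<in> X" using xsS as(11) by auto
    have cS: "c \<in> Xt t" using xin unfolding c_def by simp
    have cX: "c \<in> X" using cS as(11) by auto
    have cdef: "c = closest_point (Xt t) a'" unfolding c_def a'_def xp_def using as(17)[OF t] by simp
    have d1: "(a' - c) \<bullet> (xs - c) \<le> 0" unfolding cdef by (rule closest_point_dot[OF as(10) as(9) xsS])
    have o: "g t xs \<bullet> (c - xs) \<ge> 0"
      by (rule opt[OF as(13) as(14) _ as(11) as(10) as(15)[of t, folded xs_def] cS]) (use as(1) in simp)
    have d2: "(b - xs) \<bullet> (c - xs) \<le> 0" unfolding b_def using o as(3)
      by (simp add: inner_minus_left mult_nonneg_nonneg)
    have key: "(norm (c - xs))^2 \<le> (a' - b) \<bullet> (c - xs)"
    proof -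
      have "(a' - b) \<bullet> (c - xs) - (norm (c - xs))^2 = - ((a' - c) \<bullet> (xs - c)) - (b - xs) \<bullet> (c - xs)"
        by (simp add: power2_norm_eq_inner inner_simps inner_commute algebra_simps)
      then show ?thesis using d1 d2 by linarith
    qed
    have ab: "a' - b = ((xp - xs) - \<alpha> *\<^sub>R (g t xp - g t xs)) - \<alpha> *\<^sub>R e t"
      unfolding a'_def b_def by (simp add: algebra_simps)
    have C: "((xp - xs) - \<alpha> *\<^sub>R (g t xp - g t xs)) \<bullet> (c - xs) \<le> \<rho> * norm (xp - xs) * norm (c - xs)"
      unfolding \<rho>_def
      by (rule contraction[OF as(12) as(13) as(7) as(14) as(2) as(3) xpX xsX cX xsX])
    have E: "- ((\<alpha> *\<^sub>R e t) \<bullet> (c - xs)) \<le> \<alpha> * norm (e t) * norm (c - xs)"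
    proof -
      have "- ((\<alpha> *\<^sub>R e t) \<bullet> (c - xs)) \<le> \<bar>(\<alpha> *\<^sub>R e t) \<bullet> (c - xs)\<bar>" by simp
      also have "\<dots> \<le> norm (\<alpha> *\<^sub>R e t) * norm (c - xs)" by (rule Cauchy_Schwarz_ineq2)
      finally show ?thesis using as(3) by simp
    qed
    have "(norm (c - xs))^2 \<le> (\<rho> * norm (xp - xs) + \<alpha> * norm (e t)) * norm (c - xs)"
      using key C E unfolding ab by (simp add: inner_diff_left algebra_simps)
    then have n1: "norm (c - xs) \<le> \<rho> * norm (xp - xs) + \<alpha> * norm (e t)"
    proof (cases "norm (c - xs) = 0")
      case True then show ?thesis using rho0 as(3) by simp
    next
      case False
      then have "norm (c - xs) > 0" by simp
      moreover assume "(norm (c - xs))^2 \<le> (\<rho> * norm (xp - xs) + \<alpha> * norm (e t)) * norm (c - xs)"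
      ultimately show ?thesis by (simp add: power2_eq_square)
    qed
    have "norm (xp - xs) \<le> norm (xp - xstar (t - 1)) + norm (xstar (t - 1) - xs)"
      using norm_triangle_ineq[of "xp - xstar (t - 1)" "xstar (t - 1) - xs"] by simp
    then have "\<rho> * norm (xp - xs) \<le> \<rho> * (norm (xp - xstar (t - 1)) + norm (xstar (t - 1) - xs))"
      using rho0 by (rule mult_left_mono)
    then show ?thesis using n1 unfolding a_def c_def xs_def xp_def by (simp add: algebra_simps)
  qed
  define S where "S = (\<Sum>t=1..T. a t)"
  define \<omega> where "\<omega> = (\<Sum>t=1..T. norm (xstar (t - 1) - xstar t))"
  define Er where "Er = (\<Sum>t=1..T. norm (e t))"
  have "S \<le> (\<Sum>t=1..T. \<rho> * a (t - 1) + \<rho> * norm (xstar (t - 1) - xstar t) + \<alpha> * norm (e t))"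
    unfolding S_def by (rule sum_mono) (use step in auto)
  also have "\<dots> = \<rho> * (\<Sum>t=1..T. a (t - 1)) + \<rho> * \<omega> + \<alpha> * Er"
    unfolding \<omega>_def Er_def by (simp add: sum.distrib sum_distrib_left)
  also have "\<dots> = \<rho> * (a 0 + S - a T) + \<rho> * \<omega> + \<alpha> * Er"
    unfolding S_def shift_sum ..
  finally have "S \<le> \<rho> * (a 0 + S - a T) + \<rho> * \<omega> + \<alpha> * Er" .
  moreover have "\<rho> * a T \<ge> 0" using rho0 unfolding a_def by simp
  ultimately have "(1 - \<rho>) * S \<le> \<rho> * a 0 + \<rho> * \<omega> + \<alpha> * Er" by (simp add: algebra_simps)
  then have "S \<le> 1 / (1 - \<rho>) * (\<rho> * a 0 + \<rho> * \<omega> + \<alpha> * Er)"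
    using rho1 by (simp add: field_simps)
  then show ?thesis unfolding S_def \<omega>_def Er_def a_def \<rho>_def .
qed

end
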